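(* Suppose $\{x\in\mathbb{R}^n:A^\top x\le u\}=\emptyset$. Let $\mathcal{D}:=\{\lambda\in\mathbb{R}^m: A\lambda=0,\ \lambda\ge0,\ u^\top\lambda<0,\ \|\lambda\|\le1\}$, and let $r^*$ be the supremum of all $r$ for which there exists $\lambda^c$ with $A\lambda^c=0$ and $B(\lambda^c,r)\cap\mathrm{Null}(A)\subseteq\mathcal{D}$. Then $$\frac{\|P_Au\|}{\tau(A,u)\sqrt m}+1\ \le\ \frac1{r^*}\ \le\ \Big(\frac{\|P_Au\|}{\tau(A,u)}+1\Big)\Big(\frac{m}{\rho(A)}+\sqrt m+1\Big).$$
   Context: $A=[a_1|\cdots|a_m]\in\mathbb{R}^{n\times m}$ has columns of unit Euclidean norm and $\{A\lambda:\lambda\ge0\}=\mathbb{R}^n$; $u\in\mathbb{R}^m$. $\|\cdot\|$ is the Euclidean norm, $B(c,r)$ the closed Euclidean ball in $\mathbb{R}^m$, $\mathrm{Null}(A)$ the nullspace of $A$, and $P_A:=I-A^\top(AA^\top)^{-1}A$. $\tau(A,u):=|z^*|$ with $z^*:=\max_x\min_i(u_i-a_i^\top x)$. $\|M\|_{1,2}:=\max_{\|w\|_1=1}\|Mw\|_2$ and $\rho(A):=\min_{\Delta A}\{\|\Delta A\|_{1,2}:\exists v\ne0,\ (A+\Delta A)^\top v\le0\}$ (if $\rho(A)=0$ the upper bound is read as $+\infty$). *)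

theory Defs
  imports "HOL-Analysis.Analysis"
begin

text \<open>A :: real^'m^'n is an n x m matrix (n rows, m columns); column i is a_i.\<close>

definition z_star :: "real^'m^'n \<Rightarrow> real^'m \<Rightarrow> real" where
  "z_star A u = (SUP x. Min (range (\<lambda>i. u $ i - column i A \<bullet> x)))"

definition tau :: "real^'m^'n \<Rightarrow> real^'m \<Rightarrow> real" where
  "tau A u = \<bar>z_star A u\<bar>"

definition proj_A :: "real^'m^'n \<Rightarrow> real^'m^'m" where
  "proj_A A = mat 1 - transpose A ** matrix_inv (A ** transpose A) ** A"

definition norm12 :: "real^'m^'n \<Rightarrow> real" where
  "norm12 M = Sup {norm (M *v w) | w. (\<Sum>i\<in>UNIV. \<bar>w $ i\<bar>) = 1}"

definition rho :: "real^'m^'n \<Rightarrow> real" where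
  "rho A = Inf {norm12 dA | dA. \<exists>v. v \<noteq> 0 \<and> (\<forall>i. (transpose (A + dA) *v v) $ i \<le> 0)}"

definition Dset :: "real^'m^'n \<Rightarrow> real^'m \<Rightarrow> (real^'m) set" where
  "Dset A u = {l. A *v l = 0 \<and> (\<forall>i. 0 \<le> l $ i) \<and> u \<bullet> l < 0 \<and> norm l \<le> 1}"

definition r_star :: "real^'m^'n \<Rightarrow> real^'m \<Rightarrow> real" where
  "r_star A u = Sup {r. \<exists>lc. A *v lc = 0 \<and> cball lc r \<inter> {l. A *v l = 0} \<subseteq> Dset A u}"

end

theory Submission imports Defs begin

lemma tmv_comp: "(transpose A *v x) $ i = column i A \<bullet> (x::real^'n)"
  by (simp add: matrix_vector_mult_def column_def inner_vec_def transpose_def mult.commute)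

lemma mv_inner: "(A *v (l::real^'m)) \<bullet> (x::real^'n) = (\<Sum>i\<in>UNIV. l$i * (column i A \<bullet> x))"
  by (simp add: matrix_mult_sum inner_sum_left scalar_mult_eq_scaleR)

definition smplx :: "(real^'m) set" where
  "smplx = {t. (\<forall>i. 0 \<le> t$i) \<and> sum (\<lambda>i. t$i) UNIV = 1}"

lemma smplx_closed: "closed (smplx :: (real^'m) set)"
proof -
  have "smplx = (\<Inter>i. {t::real^'m. 0 \<le> t$i}) \<inter> {t. sum (\<lambda>i. t$i) UNIV = 1}"
    by (auto simp: smplx_def)
  moreover have "closed {t::real^'m. sum (\<lambda>i. t$i) UNIV = 1}"
    by (intro closed_Collect_eq continuous_intros)
  moreover have "closed {t::real^'m. 0 \<le> t$i}" for i
    by (intro closed_Collect_le continuous_intros)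
  ultimately show ?thesis by (metis closed_INT closed_Int)
qed

lemma smplx_bounded: "bounded (smplx :: (real^'m) set)"
  unfolding bounded_iff
proof (intro exI ballI)
  fix t :: "real^'m" assume "t \<in> smplx"
  then show "norm t \<le> 1" using norm_le_l1_cart[of t] by (simp add: smplx_def)
qed

lemma smplx_compact: "compact (smplx :: (real^'m) set)"
  using smplx_closed smplx_bounded compact_eq_bounded_closed by blast

lemma smplx_convex: "convex (smplx :: (real^'m) set)"
  unfolding convex_def smplx_def
  by (auto simp: sum.distrib sum_distrib_left[symmetric])

lemma axis_smplx: "axis i 1 \<in> (smplx :: (real^'m) set)"
  by (simp add: smplx_def axis_def)

lemma smplx_norm: "t \<in> smplx \<Longrightarrow> norm t \<le> 1"
  using norm_le_l1_cart[of t] by (simp add: smplx_def)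

lemma norm_ones: "norm (\<chi> i. 1 :: real^'m) = sqrt (real CARD('m))"
  by (simp add: norm_eq_sqrt_inner inner_vec_def)

lemma sum_le_sqrt: "(\<Sum>i\<in>UNIV. (l::real^'m)$i) \<le> sqrt (real CARD('m)) * norm l"
proof -
  have "(\<Sum>i\<in>UNIV. l$i) = (\<chi> i. 1 :: real^'m) \<bullet> l" by (simp add: inner_vec_def)
  also have "\<dots> \<le> norm (\<chi> i. 1 :: real^'m) * norm l" by (rule norm_cauchy_schwarz)
  finally show ?thesis by (simp add: norm_ones)
qed


definition gf :: "real^'m^'n \<Rightarrow> real^'m \<Rightarrow> real^'n \<Rightarrow> real" where
  "gf A u x = Min (range (\<lambda>i. u $ i - column i A \<bullet> x))"

lemma z_star_gf: "z_star A u = (SUP x. gf A u x)"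
  by (simp add: z_star_def gf_def)

lemma gf_le: "gf A u x \<le> u $ i - column i A \<bullet> x"
  unfolding gf_def by (rule Min_le) auto

lemma gf_ex: "\<exists>i. gf A u x = u $ i - column i A \<bullet> x"
proof -
  have "gf A u x \<in> range (\<lambda>i. u $ i - column i A \<bullet> x)"
    unfolding gf_def by (rule Min_in) auto
  then show ?thesis by auto
qed

lemma gf_gt: "(\<forall>i. c < u $ i - column i A \<bullet> x) \<Longrightarrow> c < gf A u x"
  using gf_ex[of A u x] by metis

lemma gf_lip:
  assumes "\<forall>i. norm (column i A) = 1"
  shows "gf A u x \<le> gf A u y + norm (x - y)"
proof -
  obtain j where j: "gf A u y = u $ j - column j A \<bullet> y" using gf_ex by blast
  have "column j A \<bullet> y - column j A \<bullet> x \<le> norm (column j A) * norm (y - x)"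
    using norm_cauchy_schwarz[of "column j A" "y - x"] by (simp add: inner_diff_right)
  then have "column j A \<bullet> y - column j A \<bullet> x \<le> norm (x - y)"
    using assms by (simp add: norm_minus_commute)
  then show ?thesis using gf_le[of A u x j] j by linarith
qed

lemma gf_cont:
  assumes "\<forall>i. norm (column i A) = 1"
  shows "continuous_on S (gf A u)"
  unfolding continuous_on_iff
proof (intro ballI allI impI)
  fix x e assume "x \<in> S" "(0::real) < e"
  show "\<exists>d>0. \<forall>x'\<in>S. dist x' x < d \<longrightarrow> dist (gf A u x') (gf A u x) < e"
  proof (intro exI[of _ e] conjI ballI impI)
    show "0 < e" by fact
  next
    fix x' assume "dist x' x < e"
    then show "dist (gf A u x') (gf A u x) < e"
      using gf_lip[OF assms, of u x x'] gf_lip[OF assms, of u x' x]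
      by (simp add: dist_real_def dist_norm norm_minus_commute abs_le_iff)
  qed
qed

lemma gf_weak:
  assumes "A *v l = 0" "l \<in> smplx"
  shows "gf A u x \<le> u \<bullet> l"
proof -
  have "gf A u x = (\<Sum>i\<in>UNIV. l$i * gf A u x)"
    using assms(2) by (simp add: smplx_def sum_distrib_right[symmetric])
  also have "\<dots> \<le> (\<Sum>i\<in>UNIV. l$i * (u $ i - column i A \<bullet> x))"
    using assms(2) by (intro sum_mono mult_left_mono gf_le) (auto simp: smplx_def)
  also have "\<dots> = (\<Sum>i\<in>UNIV. l$i * u$i) - (\<Sum>i\<in>UNIV. l$i * (column i A \<bullet> x))"
    by (simp add: right_diff_distrib sum_subtractf)
  also have "\<dots> = u \<bullet> l - (A *v l) \<bullet> x"
  proof -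
    have "u \<bullet> l = (\<Sum>i\<in>UNIV. l$i * u$i)" by (simp add: inner_vec_def mult.commute)
    then show ?thesis by (simp only: mv_inner)
  qed
  finally show ?thesis using assms(1) by simp
qed

lemma z_weak:
  assumes "A *v l = 0" "l \<in> smplx"
  shows "z_star A u \<le> u \<bullet> l"
  unfolding z_star_gf by (rule cSUP_least) (use gf_weak[OF assms] in auto)


lemma mv_bound:
  assumes "\<forall>i. 0 \<le> l$i" "\<forall>i. column i A \<bullet> x \<le> K"
  shows "(A *v l) \<bullet> (x::real^'n) \<le> K * (\<Sum>i\<in>UNIV. (l::real^'m)$i)"
proof -
  have "(A *v l) \<bullet> x = (\<Sum>i\<in>UNIV. l$i * (column i A \<bullet> x))" by (rule mv_inner)
  also have "\<dots> \<le> (\<Sum>i\<in>UNIV. l$i * K)"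
    using assms by (intro sum_mono mult_left_mono) auto
  finally show ?thesis by (simp add: sum_distrib_left mult.commute)
qed

lemma posspan_ex:
  assumes "{A *v l | l. \<forall>i. 0 \<le> l $ i} = UNIV"
  shows "\<exists>l. (\<forall>i. 0 \<le> l $ i) \<and> A *v l = y"
proof -
  have "y \<in> {A *v l | l. \<forall>i. 0 \<le> l $ i}" using assms by simp
  then show ?thesis by auto
qed

lemma gf_attain:
  fixes A :: "real^'m^'n" and u :: "real^'m"
  assumes unit: "\<forall>i. norm (column i A) = 1"
    and ps: "{A *v l | l. \<forall>i. 0 \<le> l $ i} = UNIV"
  shows "\<exists>xs. \<forall>x. gf A u x \<le> gf A u xs"
proof -
  define K where "K = (\<Sum>i\<in>UNIV. \<bar>u$i\<bar>) + \<bar>gf A u 0\<bar>"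
  have "\<forall>k. \<exists>l. (\<forall>i. 0 \<le> l $ i) \<and> A *v l = axis k 1" using posspan_ex[OF ps] by blast
  from choice[OF this] obtain lp :: "'n \<Rightarrow> real^'m" where lp: "\<And>k. (\<forall>i. 0 \<le> lp k $ i) \<and> A *v lp k = axis k 1"
    by blast
  have "\<forall>k. \<exists>l. (\<forall>i. 0 \<le> l $ i) \<and> A *v l = - axis k 1" using posspan_ex[OF ps] by blast
  from choice[OF this] obtain ln :: "'n \<Rightarrow> real^'m" where ln: "\<And>k. (\<forall>i. 0 \<le> ln k $ i) \<and> A *v ln k = - axis k 1"
    by blast
  define F where "F = {x. gf A u 0 \<le> gf A u x}"
  have Kb: "column i A \<bullet> x \<le> K" if "x \<in> F" for x i
  proof -
    have "gf A u 0 \<le> u $ i - column i A \<bullet> x" using that gf_le[of A u x i] by (simp add: F_def)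
    moreover have "\<bar>u$i\<bar> \<le> (\<Sum>i\<in>UNIV. \<bar>u$i\<bar>)"
      by (rule member_le_sum) auto
    ultimately show ?thesis unfolding K_def by linarith
  qed
  have compb: "\<bar>x$k\<bar> \<le> K * ((\<Sum>i\<in>UNIV. lp k$i) + (\<Sum>i\<in>UNIV. ln k$i))" if "x \<in> F" for x k
  proof -
    have "(A *v lp k) \<bullet> x \<le> K * (\<Sum>i\<in>UNIV. lp k$i)"
      using lp Kb[OF that] by (intro mv_bound) auto
    moreover have "(A *v ln k) \<bullet> x \<le> K * (\<Sum>i\<in>UNIV. ln k$i)"
      using ln Kb[OF that] by (intro mv_bound) auto
    moreover have "(\<Sum>i\<in>UNIV. lp k$i) \<ge> 0" "(\<Sum>i\<in>UNIV. ln k$i) \<ge> 0"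
      using lp ln by (auto intro: sum_nonneg)
    moreover have "K \<ge> 0" unfolding K_def by (auto intro: sum_nonneg)
    moreover have "(A *v lp k) \<bullet> x = x$k" using lp[of k] by (simp add: inner_axis')
    moreover have "(A *v ln k) \<bullet> x = - x$k" using ln[of k] by (simp add: inner_axis')
    ultimately have "x$k \<le> K * (\<Sum>i\<in>UNIV. lp k$i)" "- x$k \<le> K * (\<Sum>i\<in>UNIV. ln k$i)"
      "0 \<le> K * (\<Sum>i\<in>UNIV. lp k$i)" "0 \<le> K * (\<Sum>i\<in>UNIV. ln k$i)" by auto
    then show ?thesis by (simp add: distrib_left abs_le_iff)
  qed
  have "bounded F"
    unfolding bounded_iff
  proof (intro exI ballI)
    fix x assume "x \<in> F"
    have "norm x \<le> (\<Sum>k\<in>UNIV. \<bar>x$k\<bar>)" by (rule norm_le_l1_cart)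
    also have "\<dots> \<le> (\<Sum>k\<in>UNIV. K * ((\<Sum>i\<in>UNIV. lp k$i) + (\<Sum>i\<in>UNIV. ln k$i)))"
      by (intro sum_mono compb[OF \<open>x \<in> F\<close>])
    finally show "norm x \<le> (\<Sum>k\<in>UNIV. K * ((\<Sum>i\<in>UNIV. lp k$i) + (\<Sum>i\<in>UNIV. ln k$i)))" .
  qed
  moreover have "closed F"
    unfolding F_def by (intro closed_Collect_le continuous_on_const gf_cont[OF unit])
  ultimately have "compact F" using compact_eq_bounded_closed by blast
  moreover have "F \<noteq> {}" "0 \<in> F" by (auto simp: F_def)
  ultimately obtain xs where xs: "xs \<in> F" "\<forall>y\<in>F. gf A u y \<le> gf A u xs"
    using continuous_attains_sup[of F "gf A u"] gf_cont[OF unit] by blast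
  have "gf A u x \<le> gf A u xs" for x
  proof (cases "x \<in> F")
    case True then show ?thesis using xs by auto
  next
    case False
    then have "gf A u x < gf A u 0" by (simp add: F_def)
    also have "\<dots> \<le> gf A u xs" using xs \<open>0 \<in> F\<close> by auto
    finally show ?thesis by simp
  qed
  then show ?thesis by blast
qed

lemma z_attain:
  fixes A :: "real^'m^'n" and u :: "real^'m"
  assumes unit: "\<forall>i. norm (column i A) = 1"
    and ps: "{A *v l | l. \<forall>i. 0 \<le> l $ i} = UNIV"
  shows "\<exists>xs. z_star A u = gf A u xs \<and> (\<forall>x. gf A u x \<le> z_star A u)"
proof -
  obtain xs where xs: "\<forall>x. gf A u x \<le> gf A u xs" using gf_attain[OF unit ps] by blast
  have bdd: "bdd_above (range (gf A u))" using xs by (auto intro: bdd_aboveI)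
  have "z_star A u = gf A u xs"
    unfolding z_star_gf
    by (intro antisym cSUP_least cSUP_upper bdd) (use xs in auto)
  moreover have "gf A u x \<le> z_star A u" for x
    unfolding z_star_gf by (intro cSUP_upper bdd) auto
  ultimately show ?thesis by blast
qed

lemma z_neg:
  fixes A :: "real^'m^'n" and u :: "real^'m"
  assumes unit: "\<forall>i. norm (column i A) = 1"
    and ps: "{A *v l | l. \<forall>i. 0 \<le> l $ i} = UNIV"
    and infeas: "{x. \<forall>i. (transpose A *v x) $ i \<le> u $ i} = {}"
  shows "z_star A u < 0"
proof -
  obtain xs where xs: "z_star A u = gf A u xs" using z_attain[OF unit ps] by blast
  obtain i where "\<not> (transpose A *v xs) $ i \<le> u $ i" using infeas by auto
  moreover have "(transpose A *v xs) $ i = column i A \<bullet> xs" by (rule tmv_comp)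
  ultimately have "u $ i - column i A \<bullet> xs < 0" by linarith
  then show ?thesis using xs gf_le[of A u xs i] by linarith
qed

lemma mu_ex:
  fixes A :: "real^'m^'n"
  assumes ps: "{A *v l | l. \<forall>i. 0 \<le> l $ i} = UNIV"
  shows "\<exists>mu. A *v mu = 0 \<and> (\<forall>i. 1 \<le> mu $ i)"
proof -
  obtain l where l: "\<forall>i. 0 \<le> l $ i" "A *v l = - (A *v (\<chi> i. 1))" using posspan_ex[OF ps] by blast
  have "A *v (l + (\<chi> i. 1)) = 0" using l by (simp add: matrix_vector_right_distrib)
  moreover have "\<forall>i. 1 \<le> (l + (\<chi> i. 1)) $ i" using l by simp
  ultimately show ?thesis by blast
qed


lemma lin_pair: "linear (\<lambda>t::real^'m. (A *v t, u \<bullet> t))"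
proof (rule linearI)
  fix x y :: "real^'m" and c :: real
  show "(A *v (x + y), u \<bullet> (x + y)) = (A *v x, u \<bullet> x) + (A *v y, u \<bullet> y)"
    by (simp add: matrix_vector_right_distrib inner_add_right)
  show "(A *v (c *\<^sub>R x), u \<bullet> (c *\<^sub>R x)) = c *\<^sub>R (A *v x, u \<bullet> x)"
    using linear_scale[OF matrix_vector_mul_linear[of A], of c x] by simp
qed

lemma lin_img:
  fixes f :: "real^'m \<Rightarrow> 'b::euclidean_space"
  assumes "linear f"
  shows "compact (f ` smplx) \<and> convex (f ` smplx)"
proof
  have "continuous_on smplx f"
    using assms by (metis linear_continuous_on linear_conv_bounded_linear)
  then show "compact (f ` smplx)" using smplx_compact compact_continuous_image by blast
  show "convex (f ` smplx)" using assms smplx_convex convex_linear_image by blast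
qed

lemma strong_dual:
  fixes A :: "real^'m^'n" and u :: "real^'m"
  assumes unit: "\<forall>i. norm (column i A) = 1"
    and ps: "{A *v l | l. \<forall>i. 0 \<le> l $ i} = UNIV"
  shows "\<exists>t\<in>smplx. A *v t = 0 \<and> u \<bullet> t \<le> z_star A u"
proof (rule ccontr)
  assume H: "\<not> ?thesis"
  define z where "z = z_star A u"
  define f where "f = (\<lambda>t::real^'m. (A *v t, u \<bullet> t))"
  define T where "T = f ` smplx"
  define R where "R = {0::real^'n} \<times> {..z}"
  have cT: "compact T" "convex T" using lin_img[OF lin_pair] unfolding T_def f_def by auto
  have neT: "T \<noteq> {}" using axis_smplx unfolding T_def by blast
  have cR: "closed R" "convex R" unfolding R_def by (auto intro: closed_Times convex_Times)
  have "R \<inter> T = {}"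
  proof (rule ccontr)
    assume "R \<inter> T \<noteq> {}"
    then obtain t where "t \<in> smplx" "f t \<in> R" unfolding T_def by auto
    then show False using H unfolding R_def f_def z_def by auto
  qed
  then obtain a b where ab: "\<forall>x\<in>R. inner a x < b" "\<forall>x\<in>T. inner a x > b"
    using separating_hyperplane_closed_compact[OF cR(2) cR(1) cT(2) cT(1) neT] by blast
  obtain v c where vc: "a = (v, c)" by (cases a)
  have R1: "c * s < b" if "s \<le> z" for s
    using ab(1) that vc unfolding R_def by auto
  have T1: "b < v \<bullet> column i A + c * u $ i" for i
  proof -
    have "f (axis i 1) \<in> T" using axis_smplx unfolding T_def by blast
    then show ?thesis using ab(2) vc
      by (auto simp: f_def matrix_vector_mult_basis inner_axis)
  qed
  obtain mu where mu: "A *v mu = 0" "\<forall>i. 1 \<le> mu $ i" using mu_ex[OF ps] by blast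
  define S where "S = (\<Sum>i\<in>UNIV. mu $ i)"
  have Spos: "S > 0" unfolding S_def using mu(2)
    by (intro sum_pos) (auto intro: order.strict_trans2[OF zero_less_one])
  define t where "t = (1/S) *\<^sub>R mu"
  have "0 \<le> t$i" for i
  proof -
    have "0 \<le> mu$i" using mu(2) order.trans[OF zero_le_one] by blast
    then show ?thesis using Spos by (simp add: t_def)
  qed
  moreover have "(\<Sum>i\<in>UNIV. t$i) = 1" using Spos
    by (simp add: t_def S_def sum_divide_distrib[symmetric])
  ultimately have tS: "t \<in> smplx" by (simp add: smplx_def)
  have "A *v t = 0" using mu(1)
    by (simp add: t_def linear_scale[OF matrix_vector_mul_linear])
  then have "f t \<in> T" "f t = (0, u \<bullet> t)" using tS unfolding T_def f_def by auto
  then have T2: "b < c * (u \<bullet> t)" using ab(2) vc by force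
  have "c \<ge> 0"
  proof (rule ccontr)
    assume "\<not> c \<ge> 0"
    then have "c < 0" by simp
    define s where "s = min z (b / c - 1)"
    have "c * s < b" using R1 by (simp add: s_def)
    moreover have "c * s \<ge> c * (b / c - 1)" using \<open>c < 0\<close>
      by (intro mult_left_mono_neg) (auto simp: s_def)
    moreover have "c * (b / c - 1) = b - c" using \<open>c < 0\<close> by (simp add: field_simps)
    ultimately show False using \<open>c < 0\<close> by linarith
  qed
  moreover have "c \<noteq> 0"
  proof
    assume "c = 0"
    then show False using T2 R1[of z] by simp
  qed
  ultimately have cpos: "c > 0" by simp
  define x where "x = (- 1 / c) *\<^sub>R v"
  have "z < b / c" using R1[of z] cpos by (simp add: field_simps)
  also have "b / c < gf A u x"
  proof (rule gf_gt, rule allI)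
    fix i
    have "b / c < (v \<bullet> column i A + c * u $ i) / c"
      using T1[of i] cpos by (simp add: divide_strict_right_mono)
    also have "\<dots> = u $ i - column i A \<bullet> x"
      using cpos by (simp add: x_def field_simps inner_commute)
    finally show "b / c < u $ i - column i A \<bullet> x" .
  qed
  finally have "z < gf A u x" .
  moreover have "gf A u x \<le> z" using z_attain[OF unit ps] unfolding z_def by blast
  ultimately show False by simp
qed


lemma norm_mv_le: "norm ((M::real^'m^'n) *v w) \<le> (\<Sum>i\<in>UNIV. \<bar>w$i\<bar> * norm (column i M))"
proof -
  have "norm (M *v w) = norm (\<Sum>i\<in>UNIV. w$i *\<^sub>R column i M)"
    by (simp add: matrix_mult_sum scalar_mult_eq_scaleR)
  also have "\<dots> \<le> (\<Sum>i\<in>UNIV. norm (w$i *\<^sub>R column i M))" by (rule norm_sum)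
  finally show ?thesis by simp
qed

lemma norm12_bdd: "bdd_above {norm ((M::real^'m^'n) *v w) | w. (\<Sum>i\<in>UNIV. \<bar>w $ i\<bar>) = 1}"
proof (rule bdd_aboveI)
  fix x assume "x \<in> {norm (M *v w) | w. (\<Sum>i\<in>UNIV. \<bar>w $ i\<bar>) = 1}"
  then obtain w where w: "x = norm (M *v w)" "(\<Sum>i\<in>UNIV. \<bar>w $ i\<bar>) = 1" by blast
  have wi: "\<bar>w$i\<bar> \<le> 1" for i
    using w(2) member_le_sum[of i UNIV "\<lambda>i. \<bar>w$i\<bar>"] by auto
  have "x \<le> (\<Sum>i\<in>UNIV. \<bar>w$i\<bar> * norm (column i M))" using w norm_mv_le by simp
  also have "\<dots> \<le> (\<Sum>i\<in>UNIV. norm (column i M))"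
    by (intro sum_mono) (simp add: mult_left_le_one_le wi)
  finally show "x \<le> (\<Sum>i\<in>UNIV. norm (column i M))" .
qed

lemma norm12_nonneg: "0 \<le> norm12 (M::real^'m^'n)"
  unfolding norm12_def
proof (rule cSup_upper2[OF _ _ norm12_bdd])
  show "norm (M *v axis undefined 1) \<in> {norm (M *v w) | w. (\<Sum>i\<in>UNIV. \<bar>w $ i\<bar>) = 1}"
    by (auto simp: axis_def if_distrib cong: if_cong)
qed simp

lemma rho_dir:
  fixes A :: "real^'m^'n"
  assumes rpos: "rho A > 0" and v: "norm v = 1"
  shows "\<exists>i. rho A \<le> column i A \<bullet> v"
proof (rule ccontr)
  assume H: "\<not> ?thesis"
  define t where "t = max 0 (Max (range (\<lambda>i. column i A \<bullet> v)))"
  have tlt: "t < rho A"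
  proof -
    have "Max (range (\<lambda>i. column i A \<bullet> v)) \<in> range (\<lambda>i. column i A \<bullet> v)"
      by (rule Max_in) auto
    then show ?thesis using H rpos by (auto simp: t_def not_le)
  qed
  have tge: "column i A \<bullet> v \<le> t" for i
    unfolding t_def by (rule max.coboundedI2, rule Max_ge) auto
  have t0: "0 \<le> t" by (simp add: t_def)
  define dA :: "real^'m^'n" where "dA = (\<chi> r i. - t * v$r)"
  have coldA: "column i dA = - t *\<^sub>R v" for i
    by (simp add: dA_def column_def vec_eq_iff)
  have "v \<noteq> 0" using v by auto
  moreover have "(transpose (A + dA) *v v) $ i \<le> 0" for i
  proof -
    have "(transpose (A + dA) *v v) $ i = column i (A + dA) \<bullet> v" by (rule tmv_comp)
    also have "column i (A + dA) = column i A + column i dA" by (simp add: column_def vec_eq_iff)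
    finally have "(transpose (A + dA) *v v) $ i = column i A \<bullet> v - t * (v \<bullet> v)"
      by (simp add: coldA inner_add_left inner_diff_left)
    moreover have "v \<bullet> v = 1" using v by (simp add: norm_eq_sqrt_inner)
    ultimately show ?thesis using tge[of i] by simp
  qed
  ultimately have mem: "norm12 dA \<in> {norm12 dA | dA. \<exists>v. v \<noteq> 0 \<and> (\<forall>i. (transpose (A + dA) *v v) $ i \<le> 0)}"
    by blast
  have "rho A \<le> norm12 dA"
    unfolding rho_def by (rule cInf_lower[OF mem]) (auto intro!: bdd_belowI[of _ 0] norm12_nonneg)
  also have "norm12 dA \<le> t"
    unfolding norm12_def
  proof (rule cSup_least)
    show "{norm (dA *v w) | w. (\<Sum>i\<in>UNIV. \<bar>w $ i\<bar>) = 1} \<noteq> {}"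
      by (auto simp: axis_def if_distrib cong: if_cong intro!: exI[of _ "axis undefined 1"])
  next
    fix x assume "x \<in> {norm (dA *v w) | w. (\<Sum>i\<in>UNIV. \<bar>w $ i\<bar>) = 1}"
    then obtain w where w: "x = norm (dA *v w)" "(\<Sum>i\<in>UNIV. \<bar>w $ i\<bar>) = 1" by blast
    have "x \<le> (\<Sum>i\<in>UNIV. \<bar>w$i\<bar> * norm (column i dA))" using w norm_mv_le by simp
    also have "\<dots> = t" using w(2) t0 v by (simp add: coldA sum_distrib_right[symmetric])
    finally show "x \<le> t" .
  qed
  finally show False using tlt by simp
qed

lemma rho_hull:
  fixes A :: "real^'m^'n"
  assumes rpos: "rho A > 0" and unit: "\<forall>i. norm (column i A) = 1"
  shows "\<exists>b\<in>smplx. A *v b = - (rho A) *\<^sub>R column j A"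
proof (rule ccontr)
  assume H: "\<not> ?thesis"
  define y where "y = - (rho A) *\<^sub>R column j A"
  define T where "T = (\<lambda>t. A *v t) ` (smplx :: (real^'m) set)"
  have cT: "compact T" "convex T" using lin_img[OF matrix_vector_mul_linear] unfolding T_def by auto
  have "y \<notin> T" using H unfolding T_def y_def by auto
  then obtain a b where ab: "a \<bullet> y < b" "\<forall>x\<in>T. b < a \<bullet> x"
    using separating_hyperplane_closed_point[OF cT(2) compact_imp_closed[OF cT(1)]] by blast
  have colT: "column i A \<in> T" for i
    using axis_smplx[of i] unfolding T_def by (force simp: matrix_vector_mult_basis)
  have "a \<noteq> 0"
  proof
    assume "a = 0" then show False using ab colT by force
  qed
  then have an: "norm a > 0" by simp
  define v where "v = (- 1 / norm a) *\<^sub>R a"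
  have "norm v = 1" using an by (simp add: v_def)
  then obtain i where i: "rho A \<le> column i A \<bullet> v" using rho_dir[OF rpos] by blast
  have "column i A \<bullet> v = - (a \<bullet> column i A) / norm a" by (simp add: v_def inner_commute)
  also have "\<dots> < - (a \<bullet> y) / norm a"
    using ab(2) colT[of i] ab(1) an by (intro divide_strict_right_mono) auto
  also have "- (a \<bullet> y) / norm a = v \<bullet> y" by (simp add: v_def)
  also have "\<dots> \<le> norm v * norm y" by (rule norm_cauchy_schwarz)
  also have "norm y = rho A"
    using rpos unit by (simp add: y_def)
  finally show False using i \<open>norm v = 1\<close> by simp
qed


lemma nu_ex:
  fixes A :: "real^'m^'n"
  assumes rpos: "rho A > 0" and unit: "\<forall>i. norm (column i A) = 1"
  shows "\<exists>nu. A *v nu = 0 \<and> (\<forall>i. 1 \<le> nu $ i) \<and> norm nu \<le> real CARD('m) / rho A + sqrt (real CARD('m))"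
proof -
  have "\<forall>j. \<exists>b. b \<in> smplx \<and> A *v b = - (rho A) *\<^sub>R column j A"
    using rho_hull[OF rpos unit] by blast
  from choice[OF this] obtain be :: "'m \<Rightarrow> real^'m" where
    be: "\<And>j. be j \<in> smplx" "\<And>j. A *v be j = - (rho A) *\<^sub>R column j A" by blast
  define B where "B = (\<Sum>j\<in>UNIV. be j)"
  define nu where "nu = (1 / rho A) *\<^sub>R B + (\<chi> i. 1)"
  have AB: "A *v B = - (rho A) *\<^sub>R (\<Sum>j\<in>UNIV. column j A)"
    unfolding B_def by (simp add: linear_sum[OF matrix_vector_mul_linear] be scaleR_sum_right)
  have A1: "A *v (\<chi> i. 1) = (\<Sum>j\<in>UNIV. column j A)"
    by (simp add: matrix_mult_sum scalar_mult_eq_scaleR)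
  have "A *v nu = (1 / rho A) *\<^sub>R (A *v B) + A *v (\<chi> i. 1)"
    unfolding nu_def by (simp add: matrix_vector_right_distrib linear_scale[OF matrix_vector_mul_linear])
  also have "\<dots> = 0" using rpos by (simp add: AB A1)
  finally have n1: "A *v nu = 0" .
  have "0 \<le> B $ i" for i
    unfolding B_def using be(1) by (auto simp: smplx_def intro: sum_nonneg)
  then have n2: "\<forall>i. 1 \<le> nu $ i" using rpos by (simp add: nu_def)
  have "norm nu \<le> norm ((1 / rho A) *\<^sub>R B) + norm (\<chi> i. 1 :: real^'m)"
    unfolding nu_def by (rule norm_triangle_ineq)
  also have "norm ((1 / rho A) *\<^sub>R B) = norm B / rho A" using rpos by simp
  also have "norm B \<le> (\<Sum>j\<in>UNIV. norm (be j))" unfolding B_def by (rule norm_sum)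
  also have "\<dots> \<le> (\<Sum>j\<in>(UNIV::'m set). 1)" by (intro sum_mono smplx_norm be)
  finally have "norm nu \<le> real CARD('m) / rho A + sqrt (real CARD('m))"
    using rpos by (simp add: norm_ones divide_right_mono)
  then show ?thesis using n1 n2 by blast
qed

lemma pa_inner:
  assumes "A *v d = 0"
  shows "(proj_A A *v u) \<bullet> d = u \<bullet> (d::real^'m)"
proof -
  define M where "M = matrix_inv (A ** transpose A)"
  have "proj_A A *v u = u - transpose A *v (M *v (A *v u))"
    by (simp add: proj_A_def M_def matrix_vector_mult_diff_rdistrib matrix_vector_mul_assoc matrix_mul_assoc
        del: transpose_matrix_vector)
  moreover have "(transpose A *v y) \<bullet> d = y \<bullet> (A *v d)" for y
    by (simp add: dot_lmul_matrix)
  ultimately show ?thesis using assms by (simp add: inner_diff_left)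
qed

lemma pa_null:
  fixes A :: "real^'m^'n"
  assumes ps: "{A *v l | l. \<forall>i. 0 \<le> l $ i} = UNIV"
  shows "A *v (proj_A A *v u) = 0"
proof -
  define X where "X = A ** transpose A"
  have ker: "x = 0" if "X *v x = 0" for x
  proof -
    have "x \<bullet> (X *v x) = (transpose A *v x) \<bullet> (transpose A *v x)"
      by (simp add: X_def dot_lmul_matrix[symmetric] matrix_vector_mul_assoc[symmetric])
    then have At: "transpose A *v x = 0" using that by simp
    obtain l where l: "A *v l = x" using posspan_ex[OF ps] by blast
    have "x \<bullet> x = (transpose A *v x) \<bullet> l" using l by (simp add: dot_lmul_matrix)
    then show "x = 0" using At by simp
  qed
  then have "invertible X"
    using matrix_left_invertible_ker[of X] invertible_left_inverse[of X] by blast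
  then have XM: "X ** matrix_inv X = mat 1"
    unfolding invertible_def matrix_inv_def by (rule someI_ex[THEN conjunct1])
  have "proj_A A *v u = u - transpose A *v (matrix_inv X *v (A *v u))"
    by (simp add: proj_A_def X_def matrix_vector_mult_diff_rdistrib matrix_vector_mul_assoc matrix_mul_assoc
        del: transpose_matrix_vector)
  then have "A *v (proj_A A *v u) = A *v u - (X ** matrix_inv X) *v (A *v u)"
    by (simp add: matrix_vector_mult_diff_distrib X_def matrix_vector_mul_assoc matrix_mul_assoc
        del: transpose_matrix_vector)
  also have "\<dots> = 0" by (simp add: XM)
  finally show ?thesis .
qed

definition RS :: "real^'m^'n \<Rightarrow> real^'m \<Rightarrow> real set" where
  "RS A u = {r. \<exists>lc. A *v lc = 0 \<and> cball lc r \<inter> {l. A *v l = 0} \<subseteq> Dset A u}"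

lemma r_star_RS: "r_star A u = Sup (RS A u)"
  by (simp add: r_star_def RS_def)

lemma RS_le1:
  fixes A :: "real^'m^'n"
  assumes ps: "{A *v l | l. \<forall>i. 0 \<le> l $ i} = UNIV" and r: "r \<in> RS A u"
  shows "r \<le> 1"
proof (rule ccontr)
  assume "\<not> r \<le> 1"
  then have r1: "r > 1" by simp
  obtain lc where lc: "A *v lc = 0" "cball lc r \<inter> {l. A *v l = 0} \<subseteq> Dset A u"
    using r by (auto simp: RS_def)
  obtain mu where mu: "A *v mu = 0" "\<forall>i. 1 \<le> mu $ i" using mu_ex[OF ps] by blast
  have "mu \<noteq> 0" using mu(2) by (metis zero_index not_one_le_zero)
  then have mn: "norm mu > 0" by simp
  define d where "d = (r / norm mu) *\<^sub>R mu"
  have nd: "norm d = r" using mn r1 by (simp add: d_def)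
  have Ad: "A *v d = 0" using mu(1) by (simp add: d_def linear_scale[OF matrix_vector_mul_linear])
  have "lc + d \<in> Dset A u" "lc - d \<in> Dset A u"
    using lc nd Ad by (auto intro!: subsetD[OF lc(2)] simp: dist_norm matrix_vector_right_distrib
        matrix_vector_mult_diff_distrib)
  then have "norm (lc + d) \<le> 1" "norm (lc - d) \<le> 1" by (auto simp: Dset_def)
  moreover have "norm ((lc + d) - (lc - d)) \<le> norm (lc + d) + norm (lc - d)" by (rule norm_triangle_ineq4)
  moreover have "(lc + d) - (lc - d) = 2 *\<^sub>R d" by (simp add: scaleR_2)
  ultimately show False using nd r1 by simp
qed

lemma RS_bdd:
  fixes A :: "real^'m^'n"
  assumes ps: "{A *v l | l. \<forall>i. 0 \<le> l $ i} = UNIV"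
  shows "bdd_above (RS A u)"
  by (rule bdd_aboveI[of _ 1]) (rule RS_le1[OF ps])

lemma RS_neg: "-1 \<in> RS A u"
  by (auto simp: RS_def intro!: exI[of _ 0])


lemma construct:
  fixes A :: "real^'m^'n" and u :: "real^'m"
  assumes nu: "A *v nu = 0" "\<forall>i. 1 \<le> nu $ i"
    and th: "A *v th = 0" "th \<in> smplx" "u \<bullet> th \<le> - tt" and tpos: "tt > 0"
    and ka: "k > norm (proj_A A *v u) * (norm nu + 1) / tt"
  shows "1 / (k + norm nu + 1) \<in> RS A u"
proof -
  define w where "w = proj_A A *v u"
  have "norm (proj_A A *v u) * (norm nu + 1) / tt \<ge> 0"
    using tpos by (intro divide_nonneg_pos mult_nonneg_nonneg) auto
  then have k0: "k > 0" using ka by linarith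
  define al where "al = 1 / (k + norm nu + 1)"
  have alpos: "al > 0" using k0 by (simp add: al_def add_pos_nonneg)
  have kp: "k + norm nu + 1 > 0" using k0 norm_ge_zero[of nu] by linarith
  have al1: "al * (k + norm nu + 1) = 1" using kp unfolding al_def by simp
  define lc where "lc = al *\<^sub>R (k *\<^sub>R th + nu)"
  have Alc: "A *v lc = 0" using nu th
    by (simp add: lc_def linear_scale[OF matrix_vector_mul_linear] matrix_vector_right_distrib)
  have thi: "0 \<le> th $ i" for i using th(2) by (simp add: smplx_def)
  have "cball lc al \<inter> {l. A *v l = 0} \<subseteq> Dset A u"
  proof
    fix l assume l: "l \<in> cball lc al \<inter> {l. A *v l = 0}"
    then have dl: "norm (l - lc) \<le> al" and Al: "A *v l = 0" by (auto simp: dist_norm norm_minus_commute)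
    have Ad: "A *v (l - lc) = 0" using Al Alc by (simp add: matrix_vector_mult_diff_distrib)
    have "0 \<le> l $ i" for i
    proof -
      have "\<bar>(l - lc) $ i\<bar> \<le> norm (l - lc)" by (rule component_le_norm_cart)
      moreover have "lc $ i = al * (k * th $ i + nu $ i)" by (simp add: lc_def)
      moreover have "al * (k * th $ i + nu $ i) \<ge> al * 1"
      proof -
        have "0 \<le> k * th $ i" using k0 thi[of i] by simp
        then have "1 \<le> k * th $ i + nu $ i" using nu(2) by (smt (verit))
        then show ?thesis using alpos by (intro mult_left_mono) auto
      qed
      ultimately show ?thesis using dl by (simp add: abs_le_iff)
    qed
    moreover have "u \<bullet> l < 0"
    proof -
      have e0: "u \<bullet> (l - lc) = w \<bullet> (l - lc)" unfolding w_def using pa_inner[OF Ad] by simp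
      have e0': "u \<bullet> nu = w \<bullet> nu" unfolding w_def using pa_inner[OF nu(1)] by simp
      have e1: "u \<bullet> l = al * (k * (u \<bullet> th) + w \<bullet> nu) + w \<bullet> (l - lc)"
        using e0 e0' by (simp add: lc_def inner_add_right inner_diff_right algebra_simps)
      have e2: "w \<bullet> (l - lc) \<le> norm w * al"
        using norm_cauchy_schwarz[of w "l - lc"] mult_left_mono[OF dl, of "norm w"] by simp
      have e3: "w \<bullet> nu \<le> norm w * norm nu" by (rule norm_cauchy_schwarz)
      have e4: "k * (u \<bullet> th) \<le> k * (- tt)" using th(3) k0 by (intro mult_left_mono) auto
      have "k * (u \<bullet> th) + w \<bullet> nu \<le> k * (- tt) + norm w * norm nu" using e3 e4 by linarith
      then have e5: "al * (k * (u \<bullet> th) + w \<bullet> nu) \<le> al * (k * (- tt) + norm w * norm nu)"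
        using alpos by (intro mult_left_mono) auto
      have e6: "norm w * (norm nu + 1) < k * tt"
        using ka tpos unfolding w_def by (simp add: pos_divide_less_eq mult.commute)
      have "al * (k * (- tt) + norm w * norm nu) + norm w * al = al * (k * (- tt) + norm w * (norm nu + 1))"
        by (simp add: algebra_simps)
      also have "\<dots> < 0" using alpos e6 by (intro mult_pos_neg) auto
      finally show ?thesis using e1 e2 e5 by linarith
    qed
    moreover have "norm l \<le> 1"
    proof -
      have n1: "norm l \<le> norm lc + norm (l - lc)" by (rule norm_triangle_sub)
      have "norm (k *\<^sub>R th + nu) \<le> k * norm th + norm nu"
        using norm_triangle_ineq[of "k *\<^sub>R th" nu] k0 by simp
      then have n2: "norm lc \<le> al * (k * norm th + norm nu)"
        unfolding lc_def using alpos by (simp add: mult_left_mono)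
      have n3: "k * norm th \<le> k" using smplx_norm[OF th(2)] k0 by (simp add: mult_left_le)
      have "al * (k * norm th + norm nu) \<le> al * (k + norm nu)"
        using n3 alpos by (intro mult_left_mono) auto
      then have "norm l \<le> al * (k + norm nu) + al" using n1 n2 dl by linarith
      also have "\<dots> = 1" using al1 by (simp add: algebra_simps)
      finally show ?thesis .
    qed
    ultimately show "l \<in> Dset A u" using Al by (simp add: Dset_def)
  qed
  then show ?thesis using Alc unfolding RS_def al_def by blast
qed

lemma tau_eq:
  fixes A :: "real^'m^'n" and u :: "real^'m"
  assumes unit: "\<forall>i. norm (column i A) = 1"
    and ps: "{A *v l | l. \<forall>i. 0 \<le> l $ i} = UNIV"
    and infeas: "{x. \<forall>i. (transpose A *v x) $ i \<le> u $ i} = {}"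
  shows "tau A u = - z_star A u" "tau A u > 0"
  using z_neg[OF unit ps infeas] by (auto simp: tau_def)

lemma ub_gen:
  fixes A :: "real^'m^'n" and u :: "real^'m"
  assumes unit: "\<forall>i. norm (column i A) = 1"
    and ps: "{A *v l | l. \<forall>i. 0 \<le> l $ i} = UNIV"
    and infeas: "{x. \<forall>i. (transpose A *v x) $ i \<le> u $ i} = {}"
    and nu: "A *v nu = 0" "\<forall>i. 1 \<le> nu $ i"
  shows "r_star A u > 0 \<and> 1 / r_star A u \<le> (norm (proj_A A *v u) / tau A u + 1) * (norm nu + 1)"
proof -
  define t where "t = tau A u"
  have t: "t = - z_star A u" "t > 0" using tau_eq[OF unit ps infeas] by (auto simp: t_def)
  obtain th where th: "th \<in> smplx" "A *v th = 0" "u \<bullet> th \<le> z_star A u"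
    using strong_dual[OF unit ps] by blast
  define K where "K = norm (proj_A A *v u) * (norm nu + 1) / t"
  have K0: "K \<ge> 0" unfolding K_def using t(2) by (intro divide_nonneg_pos mult_nonneg_nonneg) auto
  have memb: "1 / (K + e + norm nu + 1) \<le> r_star A u" if "e > 0" for e
    unfolding r_star_RS
  proof (rule cSup_upper[OF _ RS_bdd[OF ps]])
    show "1 / (K + e + norm nu + 1) \<in> RS A u"
      using construct[OF nu th(2) th(1), where tt = t and k = "K + e"] th(3) t that by (simp add: K_def)
  qed
  have rpos: "r_star A u > 0"
  proof -
    have "K + 1 + norm nu + 1 > 0" using K0 norm_ge_zero[of nu] by linarith
    then show ?thesis using memb[of 1] by (meson divide_pos_pos less_le_trans zero_less_one)
  qed
  have "1 / r_star A u \<le> K + norm nu + 1 + e" if "e > 0" for e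
  proof -
    have p: "K + e + norm nu + 1 > 0" using K0 that norm_ge_zero[of nu] by linarith
    have "1 / r_star A u \<le> 1 / (1 / (K + e + norm nu + 1))"
      using memb[OF that] p rpos by (intro divide_left_mono) (auto intro: mult_pos_pos)
    then show ?thesis using p by simp
  qed
  then have "1 / r_star A u \<le> K + norm nu + 1" by (rule field_le_epsilon)
  also have "K + norm nu + 1 = (norm (proj_A A *v u) / t + 1) * (norm nu + 1)"
    using t by (simp add: K_def field_simps)
  finally show ?thesis using rpos by (simp add: t_def)
qed


lemma lb_elem:
  fixes A :: "real^'m^'n" and u :: "real^'m"
  assumes unit: "\<forall>i. norm (column i A) = 1"
    and ps: "{A *v l | l. \<forall>i. 0 \<le> l $ i} = UNIV"
    and infeas: "{x. \<forall>i. (transpose A *v x) $ i \<le> u $ i} = {}"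
    and r: "r \<in> RS A u"
  shows "r * (norm (proj_A A *v u) / (tau A u * sqrt (real CARD('m))) + 1) \<le> 1"
proof -
  define w where "w = proj_A A *v u"
  define t where "t = tau A u"
  define sm where "sm = sqrt (real CARD('m))"
  have t: "t = - z_star A u" "t > 0" using tau_eq[OF unit ps infeas] by (auto simp: t_def)
  have sm: "sm > 0" by (simp add: sm_def)
  have c0: "norm w / (t * sm) \<ge> 0" by (rule divide_nonneg_pos[OF norm_ge_zero mult_pos_pos[OF t(2) sm]])
  show ?thesis
  proof (cases "r \<le> 0")
    case True
    then show ?thesis using c0 unfolding w_def t_def sm_def
      by (smt (verit) mult_nonpos_nonneg)
  next
    case False
    then have rp: "r > 0" by simp
    obtain lc where lc: "A *v lc = 0" "cball lc r \<inter> {l. A *v l = 0} \<subseteq> Dset A u"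
      using r by (auto simp: RS_def)
    have "lc \<in> Dset A u" using lc rp by auto
    then have lcD: "\<forall>i. 0 \<le> lc $ i" "u \<bullet> lc < 0" "norm lc \<le> 1" by (auto simp: Dset_def)
    have "lc \<noteq> 0" using lcD(2) by auto
    then have nlc: "norm lc > 0" by simp
    have p1: "lc + (r / norm lc) *\<^sub>R lc \<in> Dset A u"
      using lc rp nlc by (intro subsetD[OF lc(2)])
        (auto simp: dist_norm matrix_vector_right_distrib linear_scale[OF matrix_vector_mul_linear])
    have "lc + (r / norm lc) *\<^sub>R lc = (1 + r / norm lc) *\<^sub>R lc" by (simp add: algebra_simps)
    then have "norm (lc + (r / norm lc) *\<^sub>R lc) = norm lc + r"
      using nlc rp by (simp add: distrib_right add_pos_pos)
    then have nr: "norm lc + r \<le> 1" using p1 by (simp add: Dset_def)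
    have Aw: "A *v w = 0" unfolding w_def by (rule pa_null[OF ps])
    have uw: "u \<bullet> w = norm w * norm w"
      using pa_inner[OF Aw, of u] by (simp add: w_def power2_norm_eq_inner[symmetric] power2_eq_square)
    have key: "u \<bullet> lc + r * norm w < 0"
    proof (cases "w = 0")
      case True then show ?thesis using lcD by simp
    next
      case False
      then have nw: "norm w > 0" by simp
      have "lc + (r / norm w) *\<^sub>R w \<in> Dset A u"
        using lc rp nw Aw by (intro subsetD[OF lc(2)])
          (auto simp: dist_norm matrix_vector_right_distrib linear_scale[OF matrix_vector_mul_linear])
      then have "u \<bullet> (lc + (r / norm w) *\<^sub>R w) < 0" by (simp add: Dset_def)
      moreover have "u \<bullet> (lc + (r / norm w) *\<^sub>R w) = u \<bullet> lc + r * norm w"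
        using nw by (simp add: inner_add_right uw)
      ultimately show ?thesis by simp
    qed
    define sg where "sg = (\<Sum>i\<in>UNIV. lc $ i)"
    have "norm lc \<le> sg" unfolding sg_def using norm_le_l1_cart[of lc] lcD(1) by simp
    then have sgp: "sg > 0" using nlc by linarith
    have sgl: "sg \<le> sm * (1 - r)"
    proof -
      have "sg \<le> sm * norm lc" unfolding sg_def sm_def by (rule sum_le_sqrt)
      also have "\<dots> \<le> sm * (1 - r)" using nr sm by (intro mult_left_mono) auto
      finally show ?thesis .
    qed
    define th where "th = (1 / sg) *\<^sub>R lc"
    have thS: "th \<in> smplx"
      using lcD(1) sgp by (simp add: smplx_def th_def sg_def sum_divide_distrib[symmetric])
    have Ath: "A *v th = 0" using lc(1) by (simp add: th_def linear_scale[OF matrix_vector_mul_linear])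
    have "z_star A u \<le> u \<bullet> th" by (rule z_weak[OF Ath thS])
    then have "- t \<le> (u \<bullet> lc) / sg" using t by (simp add: th_def)
    then have "- t * sg \<le> u \<bullet> lc" using sgp by (simp add: le_divide_eq)
    then have "r * norm w < t * sg" using key by linarith
    also have "t * sg \<le> t * (sm * (1 - r))" using sgl t by (intro mult_left_mono) auto
    finally have rw: "r * norm w < t * sm * (1 - r)" by simp
    have "r * (norm w / (t * sm)) = (r * norm w) / (t * sm)" by simp
    also have "\<dots> \<le> 1 - r"
    proof -
      have tp: "t * sm > 0" using t(2) sm by simp
      have "(1 - r) * (t * sm) = t * sm * (1 - r)" by simp
      then have "r * norm w \<le> (1 - r) * (t * sm)" using rw by linarith
      then show ?thesis using tp by (simp add: pos_divide_le_eq)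
    qed
    finally have "r * (norm w / (t * sm)) + r \<le> 1" by simp
    then show ?thesis unfolding w_def t_def sm_def by (simp add: distrib_left)
  qed
qed

theorem lemma12:
  fixes A :: "real^'m^'n" and u :: "real^'m"
  assumes unit_cols: "\<forall>i. norm (column i A) = 1"
    and pos_span: "{A *v l | l. \<forall>i. 0 \<le> l $ i} = UNIV"
    and infeas: "{x. \<forall>i. (transpose A *v x) $ i \<le> u $ i} = {}"
  shows "norm (proj_A A *v u) / (tau A u * sqrt (real CARD('m))) + 1 \<le> 1 / r_star A u
         \<and> (rho A > 0 \<longrightarrow>
             1 / r_star A u \<le> (norm (proj_A A *v u) / tau A u + 1)
                                * (real CARD('m) / rho A + sqrt (real CARD('m)) + 1))"
proof
  define c where "c = norm (proj_A A *v u) / (tau A u * sqrt (real CARD('m))) + 1"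
  have "norm (proj_A A *v u) / (tau A u * sqrt (real CARD('m))) \<ge> 0"
    using tau_eq(2)[OF unit_cols pos_span infeas] by (intro divide_nonneg_pos mult_pos_pos) auto
  then have cpos: "c > 0" unfolding c_def by linarith
  obtain mu where mu: "A *v mu = 0" "\<forall>i. 1 \<le> mu $ i" using mu_ex[OF pos_span] by blast
  have rpos: "r_star A u > 0" using ub_gen[OF unit_cols pos_span infeas mu] by blast
  have "r_star A u * c \<le> 1"
  proof -
    have "Sup (RS A u) \<le> 1 / c"
    proof (rule cSup_least)
      show "RS A u \<noteq> {}" using RS_neg by blast
    next
      fix r assume "r \<in> RS A u"
      then have "r * c \<le> 1" using lb_elem[OF unit_cols pos_span infeas] by (simp add: c_def)
      with cpos show "r \<le> 1 / c" by (simp add: pos_le_divide_eq)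
    qed
    with cpos show ?thesis unfolding r_star_RS by (simp add: pos_le_divide_eq)
  qed
  then show "c \<le> 1 / r_star A u" using rpos by (simp add: pos_le_divide_eq mult.commute)
next
  show "rho A > 0 \<longrightarrow> 1 / r_star A u \<le> (norm (proj_A A *v u) / tau A u + 1)
                                * (real CARD('m) / rho A + sqrt (real CARD('m)) + 1)"
  proof
    assume rp: "rho A > 0"
    obtain nu where nu: "A *v nu = 0" "\<forall>i. 1 \<le> nu $ i"
      "norm nu \<le> real CARD('m) / rho A + sqrt (real CARD('m))"
      using nu_ex[OF rp unit_cols] by blast
    have "1 / r_star A u \<le> (norm (proj_A A *v u) / tau A u + 1) * (norm nu + 1)"
      using ub_gen[OF unit_cols pos_span infeas nu(1,2)] by blast
    also have "\<dots> \<le> (norm (proj_A A *v u) / tau A u + 1) * (real CARD('m) / rho A + sqrt (real CARD('m)) + 1)"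
    proof (rule mult_left_mono)
      show "norm nu + 1 \<le> real CARD('m) / rho A + sqrt (real CARD('m)) + 1" using nu(3) by simp
      have "norm (proj_A A *v u) / tau A u \<ge> 0"
        using tau_eq(2)[OF unit_cols pos_span infeas] by (intro divide_nonneg_pos) auto
      then show "0 \<le> norm (proj_A A *v u) / tau A u + 1" by linarith
    qed
    finally show "1 / r_star A u \<le> (norm (proj_A A *v u) / tau A u + 1)
                                * (real CARD('m) / rho A + sqrt (real CARD('m)) + 1)" .
  qed
qed

end
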